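(* For integers $F\ge1$ and $0\le Z\le F$, $$s(F,2,Z)=\begin{cases}2F-3Z & \text{if } F\ge 2Z,\\ F-Z & \text{otherwise.}\end{cases}$$
   Context: A placement delivery array $S$-PDA$(F,K,Z)$ is an $F\times K$ array $R=(r_{j,k})$, $1\le j\le F$, $1\le k\le K$, over a finite set $S$ such that: (1) each cell is either empty or contains an element of $S$; (2) each column contains exactly $Z$ empty cells; (3) each element of $S$ occurs at most once in each row and at most once in each column; (4) if two distinct nonempty cells satisfy $r_{j_1,k_1}=r_{j_2,k_2}=t\in S$, then the cells $r_{j_1,k_2}$ and $r_{j_2,k_1}$ are empty. For integers $F,K\ge1$, $0\le Z\le F$, define $s(F,K,Z)=\min\{|S| : \text{there exists an } S\text{-PDA}(F,K,Z)\}$. *)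

theory Defs
  imports Main
begin

definition is_PDA :: "'a set \<Rightarrow> nat \<Rightarrow> nat \<Rightarrow> nat \<Rightarrow> (nat \<Rightarrow> nat \<Rightarrow> 'a option) \<Rightarrow> bool" where
  "is_PDA S F K Z R \<longleftrightarrow>
     (\<forall>j<F. \<forall>k<K. R j k = None \<or> (\<exists>t\<in>S. R j k = Some t)) \<and>
     (\<forall>k<K. card {j. j < F \<and> R j k = None} = Z) \<and>
     (\<forall>t\<in>S. \<forall>j<F. \<forall>k1<K. \<forall>k2<K. R j k1 = Some t \<and> R j k2 = Some t \<longrightarrow> k1 = k2) \<and>
     (\<forall>t\<in>S. \<forall>k<K. \<forall>j1<F. \<forall>j2<F. R j1 k = Some t \<and> R j2 k = Some t \<longrightarrow> j1 = j2) \<and>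
     (\<forall>t\<in>S. \<forall>j1<F. \<forall>j2<F. \<forall>k1<K. \<forall>k2<K.
        R j1 k1 = Some t \<and> R j2 k2 = Some t \<and> (j1, k1) \<noteq> (j2, k2) \<longrightarrow>
        R j1 k2 = None \<and> R j2 k1 = None)"

text \<open>s(F,K,Z): minimal size of a finite symbol set S admitting an S-PDA(F,K,Z).
  Symbols are taken from nat (any countably infinite supply gives the same minimum).\<close>

definition s_PDA :: "nat \<Rightarrow> nat \<Rightarrow> nat \<Rightarrow> nat" where
  "s_PDA F K Z = (LEAST n. \<exists>S :: nat set. finite S \<and> card S = n \<and> (\<exists>R. is_PDA S F K Z R))"

end

theory Submission
  imports Defs
begin

lemma lower_bound:
  fixes R :: "nat \<Rightarrow> nat \<Rightarrow> 'a option"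
  assumes P: "is_PDA S F 2 Z R" and fin: "finite S" and ZF: "Z \<le> F"
  shows "2*(F-Z) - min Z (F-Z) \<le> card S"
proof -
  have c1: "\<And>j k. j<F \<Longrightarrow> k<2 \<Longrightarrow> R j k = None \<or> (\<exists>t\<in>S. R j k = Some t)"
    and c2: "\<And>k. k<2 \<Longrightarrow> card {j. j < F \<and> R j k = None} = Z"
    and c3: "\<And>t j k1 k2. t\<in>S \<Longrightarrow> j<F \<Longrightarrow> k1<2 \<Longrightarrow> k2<2 \<Longrightarrow> R j k1 = Some t \<Longrightarrow> R j k2 = Some t \<Longrightarrow> k1 = k2"
    and c4: "\<And>t k j1 j2. t\<in>S \<Longrightarrow> k<2 \<Longrightarrow> j1<F \<Longrightarrow> j2<F \<Longrightarrow> R j1 k = Some t \<Longrightarrow> R j2 k = Some t \<Longrightarrow> j1 = j2"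
    and c5: "\<And>t j1 j2 k1 k2. t\<in>S \<Longrightarrow> j1<F \<Longrightarrow> j2<F \<Longrightarrow> k1<2 \<Longrightarrow> k2<2 \<Longrightarrow>
        R j1 k1 = Some t \<Longrightarrow> R j2 k2 = Some t \<Longrightarrow> (j1, k1) \<noteq> (j2, k2) \<Longrightarrow>
        R j1 k2 = None \<and> R j2 k1 = None"
    using P unfolding is_PDA_def by blast+
  define A where "A k = {j. j < F \<and> R j k \<noteq> None}" for k
  define g where "g k j = the (R j k)" for k j
  define T where "T k = g k ` A k" for k
  have cardA: "card (A k) = F - Z" if "k < 2" for k
  proof -
    have "A k = {..<F} - {j. j < F \<and> R j k = None}" unfolding A_def by auto
    moreover have "{j. j < F \<and> R j k = None} \<subseteq> {..<F}" by auto
    ultimately show ?thesis using c2[OF that] by (simp add: card_Diff_subset finite_subset)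
  qed
  have inj: "inj_on (g k) (A k)" if "k < 2" for k
  proof (rule inj_onI)
    fix x y assume x: "x \<in> A k" and y: "y \<in> A k" and e: "g k x = g k y"
    from x obtain t where t: "R x k = Some t" unfolding A_def by auto
    from y obtain u where u: "R y k = Some u" unfolding A_def by auto
    have "t = u" using e t u unfolding g_def by simp
    moreover have "t \<in> S" using c1[of x k] x t that unfolding A_def by auto
    ultimately show "x = y" using c4[of t k x y] x y t u that unfolding A_def by auto
  qed
  have cardT: "card (T k) = F - Z" if "k < 2" for k
    using card_image[OF inj[OF that]] cardA[OF that] unfolding T_def by simp
  have TS: "T k \<subseteq> S" if "k < 2" for k
  proof
    fix t assume "t \<in> T k"
    then obtain j where j: "j \<in> A k" "t = g k j" unfolding T_def by auto
    then obtain u where "R j k = Some u" unfolding A_def by auto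
    then show "t \<in> S" using c1[of j k] j that unfolding A_def g_def by auto
  qed
  have finT: "finite (T k)" if "k < 2" for k using TS[OF that] fin finite_subset by blast
  define B where "B = {j \<in> A 0. g 0 j \<in> T 1}"
  have IB: "T 0 \<inter> T 1 = g 0 ` B" unfolding B_def T_def by auto
  have BN: "B \<subseteq> {j. j < F \<and> R j 1 = None}"
  proof
    fix j assume j: "j \<in> B"
    then obtain t where t: "R j 0 = Some t" and jF: "j < F" unfolding B_def A_def by auto
    from j obtain j' where j': "j' \<in> A 1" "g 1 j' = g 0 j" unfolding B_def T_def by auto
    then obtain u where u: "R j' 1 = Some u" and j'F: "j' < F" unfolding A_def by auto
    have "u = t" using j' t u unfolding g_def by simp
    have tS: "t \<in> S" using c1[of j 0] jF t by auto
    have "j \<noteq> j'" using c3[of t j 0 1] tS jF t u \<open>u = t\<close> by auto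
    then show "j \<in> {j. j < F \<and> R j 1 = None}"
      using c5[of t j j' 0 1] tS jF j'F t u \<open>u = t\<close> by auto
  qed
  have "card B \<le> Z" using card_mono[OF _ BN] c2[of 1] by simp
  then have I1: "card (T 0 \<inter> T 1) \<le> Z" using IB card_image_le[of B "g 0"] BN
    by (metis finite_subset le_trans finite_Collect_conjI finite_Collect_less_nat)
  have I2: "card (T 0 \<inter> T 1) \<le> F - Z" using card_mono[of "T 0" "T 0 \<inter> T 1"] finT cardT by auto
  have U: "card (T 0 \<union> T 1) + card (T 0 \<inter> T 1) = 2*(F-Z)"
    using card_Un_Int[of "T 0" "T 1"] finT cardT by auto
  have "card (T 0 \<union> T 1) \<le> card S" using card_mono[OF fin] TS by auto
  then show ?thesis using U I1 I2 by linarith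
qed

definition Rc :: "nat \<Rightarrow> nat \<Rightarrow> nat \<Rightarrow> nat \<Rightarrow> nat \<Rightarrow> nat option" where
  "Rc F Z m j k = (if k = 0 then (if j < m then Some j else if j < m+Z then None else Some (j - Z))
     else (if j < m then None else if j < 2*m then Some (j - m) else if j < m + Z then None
       else Some (j - Z - m + (F - Z))))"

lemma construction:
  assumes ZF: "Z \<le> F" and m: "m = min Z (F-Z)"
  shows "is_PDA {0..<2*(F-Z) - m} F 2 Z (Rc F Z m)"
proof -
  have mZ: "m \<le> Z" and mF: "m \<le> F - Z" using m by auto
  have k2: "\<And>k::nat. k < 2 \<longleftrightarrow> k = 0 \<or> k = 1" by auto
  have col0: "{j. j < F \<and> Rc F Z m j 0 = None} = {m..<m+Z}"
    using mZ mF ZF by (auto simp: Rc_def)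
  have col1: "{j. j < F \<and> Rc F Z m j 1 = None} = {..<m} \<union> {2*m..<m+Z}"
    using mZ mF ZF by (auto simp: Rc_def)
  have cc1: "card ({..<m} \<union> {2*m..<m+Z}) = Z"
    using mZ mF ZF by (subst card_Un_disjoint) auto
  show ?thesis unfolding is_PDA_def
  proof (intro conjI)
    show "\<forall>j<F. \<forall>k<2. Rc F Z m j k = None \<or> (\<exists>t\<in>{0..<2 * (F - Z) - m}. Rc F Z m j k = Some t)"
      using mZ mF ZF unfolding k2 by (auto simp: Rc_def)
    show "\<forall>k<2. card {j. j < F \<and> Rc F Z m j k = None} = Z"
      unfolding k2 using col0 col1 cc1 by auto
    show "\<forall>t\<in>{0..<2 * (F - Z) - m}. \<forall>j<F. \<forall>k1<2. \<forall>k2<2. Rc F Z m j k1 = Some t \<and> Rc F Z m j k2 = Some t \<longrightarrow> k1 = k2"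
      using mZ mF ZF unfolding k2 by (auto simp: Rc_def split: if_splits)
    show "\<forall>t\<in>{0..<2 * (F - Z) - m}. \<forall>k<2. \<forall>j1<F. \<forall>j2<F. Rc F Z m j1 k = Some t \<and> Rc F Z m j2 k = Some t \<longrightarrow> j1 = j2"
      using mZ mF ZF unfolding k2 by (auto simp: Rc_def split: if_splits)
    show "\<forall>t\<in>{0..<2 * (F - Z) - m}. \<forall>j1<F. \<forall>j2<F. \<forall>k1<2. \<forall>k2<2.
        Rc F Z m j1 k1 = Some t \<and> Rc F Z m j2 k2 = Some t \<and> (j1, k1) \<noteq> (j2, k2) \<longrightarrow>
        Rc F Z m j1 k2 = None \<and> Rc F Z m j2 k1 = None"
      using mZ mF ZF unfolding k2 by (auto simp: Rc_def split: if_splits)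
  qed
qed

theorem mainTheorem4:
  fixes F Z :: nat
  assumes "F \<ge> 1" and "Z \<le> F"
  shows "s_PDA F 2 Z = (if F \<ge> 2 * Z then 2 * F - 3 * Z else F - Z)"
proof -
  define n where "n = 2*(F-Z) - min Z (F-Z)"
  have "s_PDA F 2 Z = n"
    unfolding s_PDA_def
  proof (rule Least_equality)
    show "\<exists>S :: nat set. finite S \<and> card S = n \<and> (\<exists>R. is_PDA S F 2 Z R)"
      using construction[OF assms(2) refl] unfolding n_def by (intro exI[of _ "{0..<n}"]) (auto simp: n_def)
    show "n \<le> y" if "\<exists>S :: nat set. finite S \<and> card S = y \<and> (\<exists>R. is_PDA S F 2 Z R)" for y
      using that lower_bound assms(2) unfolding n_def by blast
  qed
  then show ?thesis unfolding n_def by auto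
qed

end
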